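(* Let $\alpha\in\mathbb{C}$ with $\Re(\alpha)>-1/2$. Then for every $n\in\mathbb{N}_0$, $$(2\alpha+1)\,p_n(x;\alpha+1)=-x\,p_n''(x;\alpha)+(2x-1-2\alpha)\,p_n'(x;\alpha)+(1+2\alpha)\,p_n(x;\alpha).$$
   Context: Let $\mathcal{A}$ be the differential operator $\mathcal{A}f(x)=-x^2f''(x)-xf'(x)+x^2f(x)$ on functions of $x>0$, with iterates $\mathcal{A}^n$ ($\mathcal{A}^0$ = identity). For $\alpha\in\mathbb{C}$, $n\in\mathbb{N}_0$, $p_n(x;\alpha)=(-1)^n e^{x}x^{-\alpha}\,\mathcal{A}^n\big(e^{-x}x^{\alpha}\big)$; for $\Re(\alpha)>-1/2$ these are polynomials in $x$ of degree $n$. Primes denote derivatives in $x$. *)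

theory Defs
  imports "HOL-Analysis.Analysis"
begin

definition xderiv :: "(real \<Rightarrow> complex) \<Rightarrow> real \<Rightarrow> complex" where
  "xderiv f x = vector_derivative f (at x)"

definition opA :: "(real \<Rightarrow> complex) \<Rightarrow> real \<Rightarrow> complex" where
  "opA f x = - ((complex_of_real x)^2 * xderiv (xderiv f) x) - complex_of_real x * xderiv f x + (complex_of_real x)^2 * f x"

definition pn :: "nat \<Rightarrow> complex \<Rightarrow> real \<Rightarrow> complex" where
  "pn n \<alpha> x = (-1)^n * exp (complex_of_real x) * (complex_of_real x) powr (-\<alpha>) *
      (opA ^^ n) (\<lambda>t. exp (- complex_of_real t) * (complex_of_real t) powr \<alpha>) x"

end

theory Submission
  imports Defs "HOL-Computational_Algebra.Polynomial"
begin

definition F :: "complex \<Rightarrow> complex poly \<Rightarrow> real \<Rightarrow> complex" where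
  "F a q = (\<lambda>t. exp (- complex_of_real t) * complex_of_real t powr a * poly q (complex_of_real t))"

definition dq :: "complex \<Rightarrow> complex poly \<Rightarrow> complex poly" where
  "dq a q = smult a q + [:0,1:] * pderiv q - [:0,1:] * q"

lemma cpowr_shift: "(z::complex) \<noteq> 0 \<Longrightarrow> z powr a = z powr (a-1) * z"
  using powr_add[of z "a-1" 1] by simp

lemma F_deriv:
  assumes "x > 0"
  shows "(F a q has_vector_derivative F (a-1) (dq a q) x) (at x)"
proof -
  let ?z = "complex_of_real x"
  have nz: "?z \<notin> \<real>\<^sub>\<le>\<^sub>0" using assms by (simp add: complex_nonpos_Reals_iff)
  have D: "((\<lambda>z. exp (- z) * z powr a * poly q z) has_field_derivative
      (- exp (- ?z) * ?z powr a * poly q ?z + exp (- ?z) * (a * ?z powr (a-1)) * poly q ?z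
       + exp (- ?z) * ?z powr a * poly (pderiv q) ?z)) (at ?z)"
  proof -
    have de: "((\<lambda>z. exp (- z)) has_field_derivative (- exp (- ?z))) (at ?z)"
      using DERIV_chain'[OF DERIV_minus[OF DERIV_ident] DERIV_exp] by simp
    have dp: "((\<lambda>z. z powr a) has_field_derivative (a * ?z powr (a-1))) (at ?z)"
      by (rule has_field_derivative_powr[OF nz])
    show ?thesis
      by (rule DERIV_cong[OF DERIV_mult[OF DERIV_mult[OF de dp] poly_DERIV]]) (simp add: algebra_simps)
  qed
  have E: "(- exp (- ?z) * ?z powr a * poly q ?z + exp (- ?z) * (a * ?z powr (a-1)) * poly q ?z
       + exp (- ?z) * ?z powr a * poly (pderiv q) ?z) = F (a-1) (dq a q) x"
  proof -
    have e: "?z powr a = ?z powr (a-1) * ?z" using assms by (intro cpowr_shift) simp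
    show ?thesis unfolding F_def dq_def e by (simp add: algebra_simps)
  qed
  show ?thesis unfolding F_def[of a q] by (rule has_vector_derivative_real_field[OF D[unfolded E]])
qed


lemma xderiv_F:
  assumes "\<forall>y>0. f y = F a q y" "x > 0"
  shows "xderiv f x = F (a-1) (dq a q) x"
proof -
  have "(f has_vector_derivative F (a-1) (dq a q) x) (at x)"
    by (rule has_vector_derivative_transform_within_open[OF F_deriv[OF assms(2)], of "{0<..}"])
       (use assms in auto)
  then show ?thesis by (simp add: xderiv_def vector_derivative_at)
qed

definition Bp :: "complex \<Rightarrow> complex poly \<Rightarrow> complex poly" where
  "Bp a q = - ([:0,0,1:] * pderiv (pderiv q)) + [:0,1:] * [: -2*a-1, 2:] * pderiv q + [: -(a^2), 2*a+1:] * q"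

lemma opA_F:
  assumes "\<forall>y>0. f y = F a q y" "x > 0"
  shows "opA f x = F a (Bp a q) x"
proof -
  have h1: "\<forall>y>0. xderiv f y = F (a-1) (dq a q) y" using xderiv_F[OF assms(1)] by auto
  have h2: "xderiv (xderiv f) x = F (a-1-1) (dq (a-1) (dq a q)) x" using xderiv_F[OF h1 assms(2)] .
  let ?z = "complex_of_real x"
  have z: "?z \<noteq> 0" using assms by simp
  have p1: "?z powr (a-1) = ?z powr a / ?z" by (simp add: powr_diff)
  have p2: "?z powr (a-1-1) = ?z powr a / ?z / ?z" using powr_diff[of ?z "a-1" 1] p1 by simp
  have sq: "?z^2 = ?z*?z" by (rule power2_eq_square)
  show ?thesis
    unfolding opA_def sq h2 h1[rule_format, OF assms(2)] assms(1)[rule_format, OF assms(2)]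
    unfolding F_def p1 p2 using z
    apply (simp add: dq_def Bp_def pderiv_add pderiv_diff pderiv_smult pderiv_mult pderiv_pCons field_simps power2_eq_square)
    done
qed


lemma iter_F: "\<forall>y>0. (opA^^n) (F a 1) y = F a ((Bp a ^^ n) 1) y"
proof (induction n)
  case 0 then show ?case by simp
next
  case (Suc n)
  show ?case using opA_F[OF Suc] by simp
qed

lemma pn_poly:
  assumes "x > 0"
  shows "pn n a x = poly (smult ((-1)^n) ((Bp a ^^ n) 1)) (complex_of_real x)"
proof -
  have e: "(\<lambda>t. exp (- complex_of_real t) * complex_of_real t powr a) = F a 1"
    by (simp add: F_def fun_eq_iff)
  have z: "complex_of_real x \<noteq> 0" using assms by simp
  show ?thesis unfolding pn_def e iter_F[rule_format, OF assms]
    using z by (simp add: F_def powr_minus exp_minus field_simps)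
qed

lemma xderiv_poly:
  assumes "\<forall>y>0. f y = poly p (complex_of_real y)" "x > 0"
  shows "xderiv f x = poly (pderiv p) (complex_of_real x)"
proof -
  have "(f has_vector_derivative poly (pderiv p) (complex_of_real x)) (at x)"
    by (rule has_vector_derivative_transform_within_open[OF
          has_vector_derivative_real_field[OF poly_DERIV], of "{0<..}"])
       (use assms in auto)
  then show ?thesis by (simp add: xderiv_def vector_derivative_at)
qed

definition Lp :: "complex \<Rightarrow> complex poly \<Rightarrow> complex poly" where
  "Lp a q = - ([:0,1:] * pderiv (pderiv q)) + [:-1-2*a, 2:] * pderiv q + [:1+2*a:] * q"

lemma Lp_lin: "Lp a (p + r) = Lp a p + Lp a r" "Lp a (smult c p) = smult c (Lp a p)"
  by (rule poly_ext; simp add: Lp_def pderiv_add pderiv_diff pderiv_minus pderiv_smult pderiv_mult pderiv_pCons algebra_simps)+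

lemma Bp_lin: "Bp a (p + r) = Bp a p + Bp a r" "Bp a (smult c p) = smult c (Bp a p)"
  by (rule poly_ext; simp add: Bp_def pderiv_add pderiv_diff pderiv_minus pderiv_smult pderiv_mult pderiv_pCons algebra_simps)+

lemma XL: "[:0,1:] * Lp a q = Bp a q + smult (a^2) q"
  by (rule poly_ext; simp add: Lp_def Bp_def pderiv_add pderiv_diff pderiv_minus pderiv_smult pderiv_mult pderiv_pCons algebra_simps power2_eq_square)

lemma XB: "[:0,1:] * Bp (a+1) f = Bp a ([:0,1:] * f)"
  by (rule poly_ext; simp add: Bp_def pderiv_add pderiv_diff pderiv_minus pderiv_smult pderiv_mult pderiv_pCons algebra_simps power2_eq_square)

lemma LB: "Lp a (Bp a f) = Bp (a+1) (Lp a f)"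
proof -
  have "[:0,1:] * Lp a (Bp a f) = Bp a (Bp a f) + smult (a^2) (Bp a f)" by (rule XL)
  also have "\<dots> = Bp a (Bp a f + smult (a^2) f)" by (simp add: Bp_lin)
  also have "\<dots> = Bp a ([:0,1:] * Lp a f)" by (simp only: XL)
  also have "\<dots> = [:0,1:] * Bp (a+1) (Lp a f)" by (rule XB[symmetric])
  finally have "[:0,1:] * Lp a (Bp a f) = [:0,1:] * Bp (a+1) (Lp a f)" .
  then show ?thesis using mult_left_cancel[of "[:0,1::complex:]"] by simp
qed

lemma L_iter: "Lp a ((Bp a ^^ n) 1) = smult (1+2*a) ((Bp (a+1) ^^ n) 1)"
proof (induction n)
  case 0 then show ?case by (simp add: Lp_def)
next
  case (Suc n) then show ?case by (simp add: LB Bp_lin)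
qed


theorem mainTheorem2:
  fixes \<alpha> :: complex and n :: nat and x :: real
  assumes "Re \<alpha> > -1/2" and "x > 0"
  shows "(2*\<alpha>+1) * pn n (\<alpha>+1) x =
           - complex_of_real x * xderiv (xderiv (pn n \<alpha>)) x
           + (2 * complex_of_real x - 1 - 2*\<alpha>) * xderiv (pn n \<alpha>) x
           + (1 + 2*\<alpha>) * pn n \<alpha> x"
proof -
  define P where "P = smult ((-1)^n) ((Bp \<alpha> ^^ n) 1)"
  have h0: "\<forall>y>0. pn n \<alpha> y = poly P (complex_of_real y)" using pn_poly unfolding P_def by auto
  have h1: "\<forall>y>0. xderiv (pn n \<alpha>) y = poly (pderiv P) (complex_of_real y)"
    using xderiv_poly[OF h0] by auto
  have h2: "xderiv (xderiv (pn n \<alpha>)) x = poly (pderiv (pderiv P)) (complex_of_real x)"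
    using xderiv_poly[OF h1 assms(2)] .
  have h3: "pn n (\<alpha>+1) x = poly (smult ((-1)^n) ((Bp (\<alpha>+1) ^^ n) 1)) (complex_of_real x)"
    using pn_poly[OF assms(2)] .
  have L: "Lp \<alpha> P = smult ((-1)^n) (smult (1+2*\<alpha>) ((Bp (\<alpha>+1) ^^ n) 1))"
    unfolding P_def by (simp add: Lp_lin L_iter)
  have "poly (Lp \<alpha> P) (complex_of_real x) =
        poly (smult ((-1)^n) (smult (1+2*\<alpha>) ((Bp (\<alpha>+1) ^^ n) 1))) (complex_of_real x)"
    by (simp only: L)
  then show ?thesis
    unfolding h2 h1[rule_format, OF assms(2)] h0[rule_format, OF assms(2)] h3
    by (simp add: Lp_def algebra_simps)
qed

end
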